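(* Let $M, N$ be $\lambda$-terms with $M \twoheadrightarrow_\beta N$. Then $M$ and $N$ have the same Böhm tree, and $\mathrm{cBT}(M) \ge \mathrm{cBT}(N)$; i.e. at every position either both clocked Böhm trees are unannotated, or both are annotated, with natural numbers $k_1$ (in $\mathrm{cBT}(M)$) and $k_2$ (in $\mathrm{cBT}(N)$) satisfying $k_1 \ge k_2$. (Clocks are accelerated under reduction and slowed down under expansion.)
   Context: Untyped $\lambda$-calculus with $\beta$-reduction; $\twoheadrightarrow_\beta$ is its reflexive–transitive closure. A head reduction step is a step $\lambda x_1\ldots x_n.(\lambda y.P)Q Q_1\ldots Q_m \to \lambda x_1\ldots x_n.P[y:=Q] Q_1\ldots Q_m$ ($n,m\ge0$); a head normal form (hnf) is a term $\lambda x_1\ldots x_n.\,y M_1\ldots M_m$; a term has an hnf if it reduces to one. The clocked Böhm tree $\mathrm{cBT}(t)$ is the (possibly infinite) annotated term defined coinductively: if $t$ has no hnf, $\mathrm{cBT}(t) = \bot$ (unannotated); otherwise there is a head reduction of some length $k$ from $t$ to an hnf $\lambda x_1\ldots x_n.\,y M_1\ldots M_m$, and $\mathrm{cBT}(t)$ is the term $\lambda x_1\ldots x_n.\,y\,\mathrm{cBT}(M_1)\ldots\mathrm{cBT}(M_m)$ whose root is annotated with $k$. The Böhm tree $\mathrm{BT}(t)$ is obtained from $\mathrm{cBT}(t)$ by erasing all annotations. Positions in such trees are finite sequences over $\{0,1,2\}$ (0: body of an abstraction, 1: function part of an application, 2: argument part). *)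

theory Defs
  imports Main
begin

datatype (discs_sels) dB = Var nat | App dB dB | Abs dB

primrec lift :: "dB \<Rightarrow> nat \<Rightarrow> dB" where
  "lift (Var i) k = (if i < k then Var i else Var (i + 1))"
| "lift (App s t) k = App (lift s k) (lift t k)"
| "lift (Abs s) k = Abs (lift s (k + 1))"

primrec subst :: "dB \<Rightarrow> dB \<Rightarrow> nat \<Rightarrow> dB" where
  "subst (Var i) s k = (if k < i then Var (i - 1) else if i = k then s else Var i)"
| "subst (App t u) s k = App (subst t s k) (subst u s k)"
| "subst (Abs t) s k = Abs (subst t (lift s 0) (k + 1))"

inductive beta :: "dB \<Rightarrow> dB \<Rightarrow> bool" where
  beta_redex: "beta (App (Abs s) t) (subst s t 0)"
| beta_appL: "beta s t \<Longrightarrow> beta (App s u) (App t u)"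
| beta_appR: "beta s t \<Longrightarrow> beta (App u s) (App u t)"
| beta_abs: "beta s t \<Longrightarrow> beta (Abs s) (Abs t)"

fun is_abs :: "dB \<Rightarrow> bool" where
  "is_abs (Abs _) = True"
| "is_abs _ = False"

text \<open>Head reduction step:
  \<open>\<lambda>x1..xn.(\<lambda>y.P) Q Q1..Qm \<rightarrow> \<lambda>x1..xn. P[y:=Q] Q1..Qm\<close>.\<close>
inductive hred :: "dB \<Rightarrow> dB \<Rightarrow> bool" where
  hred_redex: "hred (App (Abs s) t) (subst s t 0)"
| hred_app: "hred s t \<Longrightarrow> \<not> is_abs s \<Longrightarrow> hred (App s u) (App t u)"
| hred_abs: "hred s t \<Longrightarrow> hred (Abs s) (Abs t)"

fun head_var_app :: "dB \<Rightarrow> bool" where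
  "head_var_app (Var _) = True"
| "head_var_app (App s _) = head_var_app s"
| "head_var_app (Abs _) = False"

fun is_hnf :: "dB \<Rightarrow> bool" where
  "is_hnf (Abs s) = is_hnf s"
| "is_hnf t = head_var_app t"

definition has_hnf :: "dB \<Rightarrow> bool" where
  "has_hnf t \<longleftrightarrow> (\<exists>u. beta\<^sup>*\<^sup>* t u \<and> is_hnf u)"

text \<open>A head reduction of length k to an hnf (chosen; it is unique since head reduction
  is deterministic and hnfs are head-normal).\<close>
definition head_red_to_hnf :: "dB \<Rightarrow> nat \<times> dB" where
  "head_red_to_hnf t = (SOME (k, h). (hred ^^ k) t h \<and> is_hnf h)"

definition clock :: "dB \<Rightarrow> nat" where
  "clock t = fst (head_red_to_hnf t)"

definition hnf_of :: "dB \<Rightarrow> dB" where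
  "hnf_of t = snd (head_red_to_hnf t)"

text \<open>Possibly infinite annotated terms; the annotation \<open>nat option\<close> is \<open>None\<close> for an
  unannotated node. \<open>ABot\<close> is the unannotated \<open>\<bottom>\<close>.\<close>
codatatype abt = ABot | AVar "nat option" nat | AAbs "nat option" abt | AApp "nat option" abt abt

codatatype bt = BBot | BVar nat | BAbs bt | BApp bt bt

text \<open>\<open>cbt_aux True t\<close> = cBT(t); \<open>cbt_aux False h\<close> unfolds the (unannotated) inner nodes of
  an hnf spine, whose arguments are again turned into clocked Boehm trees.\<close>
primcorec cbt_aux :: "bool \<Rightarrow> dB \<Rightarrow> abt" where
  "cbt_aux r t =
    (if r \<and> \<not> has_hnf t then ABot
     else (case (if r then hnf_of t else t) of
       Var y \<Rightarrow> AVar (if r then Some (clock t) else None) y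
     | Abs s \<Rightarrow> AAbs (if r then Some (clock t) else None) (cbt_aux False s)
     | App f u \<Rightarrow> AApp (if r then Some (clock t) else None) (cbt_aux False f) (cbt_aux True u)))"

definition cBT :: "dB \<Rightarrow> abt" where
  "cBT t = cbt_aux True t"

primcorec erase :: "abt \<Rightarrow> bt" where
  "erase T = (case T of
     ABot \<Rightarrow> BBot
   | AVar _ y \<Rightarrow> BVar y
   | AAbs _ s \<Rightarrow> BAbs (erase s)
   | AApp _ f u \<Rightarrow> BApp (erase f) (erase u))"

definition BT :: "dB \<Rightarrow> bt" where
  "BT t = erase (cBT t)"

text \<open>Positions: lists over {0,1,2} (0 body of abstraction, 1 function part, 2 argument).\<close>
fun subtree_at :: "abt \<Rightarrow> nat list \<Rightarrow> abt option" where
  "subtree_at T [] = Some T"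
| "subtree_at (AAbs _ s) (i # p) = (if i = 0 then subtree_at s p else None)"
| "subtree_at (AApp _ f u) (i # p) =
     (if i = 1 then subtree_at f p else if i = 2 then subtree_at u p else None)"
| "subtree_at _ (_ # _) = None"

fun root_ann :: "abt \<Rightarrow> nat option" where
  "root_ann ABot = None"
| "root_ann (AVar a _) = a"
| "root_ann (AAbs a _) = a"
| "root_ann (AApp a _ _) = a"

text \<open>Annotation at a position (None if unannotated or no such position).\<close>
definition clock_at :: "abt \<Rightarrow> nat list \<Rightarrow> nat option" where
  "clock_at T p = Option.bind (subtree_at T p) root_ann"

end

theory Submission
  imports Defs
begin


lemma lift_lift: "i < k + 1 \<Longrightarrow> lift (lift t i) (Suc k) = lift (lift t k) i"
  by (induct t arbitrary: i k) auto

lemma lift_subst [simp]: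
  "j < i + 1 \<Longrightarrow> lift (subst t s j) i = subst (lift t (i + 1)) (lift s i) j"
  by (induct t arbitrary: i j s) (auto simp: lift_lift)

lemma lift_subst_lt:
  "i < j + 1 \<Longrightarrow> lift (subst t s j) i = subst (lift t i) (lift s i) (j + 1)"
  by (induct t arbitrary: i j s) (auto simp: lift_lift)

lemma subst_lift [simp]: "subst (lift t k) s k = t"
  by (induct t arbitrary: k s) simp_all

lemma subst_subst:
  "i < j + 1 \<Longrightarrow> subst (subst t (lift v i) (Suc j)) (subst u v j) i = subst (subst t u i) v j"
  by (induct t arbitrary: i j u v) (auto simp: lift_lift [symmetric] lift_subst_lt)

inductive par :: "dB \<Rightarrow> dB \<Rightarrow> bool" where
  pVar: "par (Var n) (Var n)"
| pAbs: "par s t \<Longrightarrow> par (Abs s) (Abs t)"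
| pApp: "par s t \<Longrightarrow> par u v \<Longrightarrow> par (App s u) (App t v)"
| pBeta: "par s s' \<Longrightarrow> par u u' \<Longrightarrow> par (App (Abs s) u) (subst s' u' 0)"

lemma par_refl[simp]: "par t t"
  by (induct t) (auto intro: par.intros)

lemma par_lift: "par s t \<Longrightarrow> par (lift s i) (lift t i)"
proof (induct arbitrary: i rule: par.induct)
  case (pBeta s s' u u')
  then show ?case using par.pBeta[of "lift s (Suc i)" "lift s' (Suc i)" "lift u i" "lift u' i"] by simp
qed (auto intro: par.intros)

lemma par_subst: "par s s' \<Longrightarrow> par u u' \<Longrightarrow> par (subst s u k) (subst s' u' k)"
proof (induct arbitrary: u u' k rule: par.induct)
  case (pVar n) then show ?case by (auto intro: par.intros)
next
  case (pAbs s t) then show ?case by (simp add: par.pAbs par_lift)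
next
  case (pApp s t u v) then show ?case by (auto intro!: par.intros)
next
  case (pBeta s s' v v')
  have "par (App (Abs (subst s (lift u 0) (Suc k))) (subst v u k))
            (subst (subst s' (lift u' 0) (Suc k)) (subst v' u' k) 0)"
  proof (rule par.pBeta)
    show "par (subst s (lift u 0) (Suc k)) (subst s' (lift u' 0) (Suc k))"
      using pBeta par_lift by blast
    show "par (subst v u k) (subst v' u' k)" using pBeta by blast
  qed
  then show ?case using subst_subst[of 0 k s' u' v'] by simp
qed

lemma hred_lift: "hred s t \<Longrightarrow> hred (lift s i) (lift t i)"
proof (induct arbitrary: i rule: hred.induct)
  case (hred_redex s t)
  then show ?case using hred.hred_redex[of "lift s (Suc i)" "lift t i"] by simp
next
  case (hred_app s t u)
  then show ?case by (cases s) (auto intro: hred.intros)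
qed (auto intro: hred.intros)

lemma hred_not_Var: "hred s t \<Longrightarrow> \<not> is_Var s"
  by (induct rule: hred.induct) auto

lemma hred_subst: "hred s t \<Longrightarrow> hred (subst s u k) (subst t u k)"
proof (induct arbitrary: u k rule: hred.induct)
  case (hred_redex s t)
  then show ?case using hred.hred_redex[of "subst s (lift u 0) (Suc k)" "subst t u k"]
      subst_subst[of 0 k s u t] by simp
next
  case (hred_app s t v)
  then show ?case using hred_not_Var[OF hred_app(1)] by (cases s) (auto intro: hred.intros)
qed (auto intro: hred.intros)

lemma hred_det: "hred x y \<Longrightarrow> hred x z \<Longrightarrow> y = z"
proof (induct arbitrary: z rule: hred.induct)
  case (hred_redex s t)
  from hred_redex show ?case
  proof (cases rule: hred.cases)
    case hred_app then show ?thesis by simp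
  qed simp
next
  case (hred_app s t u)
  note IH = hred_app(2) and na = hred_app(3)
  from hred_app(4) show ?case
  proof (cases rule: hred.cases)
    case hred_redex then show ?thesis using na by simp
  next
    case (hred_app t')
    then show ?thesis using IH by simp
  qed
next
  case (hred_abs s t)
  note IH = hred_abs(2)
  from hred_abs(3) show ?case
  proof (cases rule: hred.cases)
    case (hred_abs t') then show ?thesis using IH by simp
  qed
qed

lemma hva_no_hred: "head_var_app x \<Longrightarrow> \<not> hred x y"
proof (induct x arbitrary: y)
  case (Var n) show ?case
  proof assume "hred (Var n) y" then show False by (cases rule: hred.cases) qed
next
  case (App x1 x2) show ?case
  proof
    assume "hred (App x1 x2) y" then show False by (cases rule: hred.cases) (use App in auto)
  qed
qed simp

lemma hnf_no_hred: "is_hnf x \<Longrightarrow> \<not> hred x y"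
proof (induct x arbitrary: y)
  case (Var n) show ?case
  proof assume "hred (Var n) y" then show False by (cases rule: hred.cases) qed
next
  case (Abs x) show ?case
  proof
    assume "hred (Abs x) y" then show False by (cases rule: hred.cases) (use Abs in auto)
  qed
next
  case (App x1 x2) then show ?case using hva_no_hred[of "App x1 x2"] by simp
qed

lemma hred_pow_unique:
  "(hred ^^ k) x h \<Longrightarrow> is_hnf h \<Longrightarrow> (hred ^^ j) x h' \<Longrightarrow> is_hnf h' \<Longrightarrow> k = j \<and> h = h'"
proof (induct k arbitrary: x j)
  case 0
  show ?case
  proof (cases j)
    case (Suc j')
    with 0 have "(hred ^^ Suc j') x h'" by simp
    then obtain y where "hred x y" using relpowp_Suc_D2 by metis
    from 0(1) have "x = h" by simp
    have False using hnf_no_hred[OF 0(2)] \<open>hred x y\<close> \<open>x = h\<close> by simp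
    then show ?thesis ..
  next
    case 0
    with \<open>(hred ^^ 0) x h\<close> \<open>(hred ^^ j) x h'\<close> show ?thesis by simp
  qed
next
  case (Suc k)
  from Suc(2) obtain y where y: "hred x y" "(hred ^^ k) y h" using relpowp_Suc_D2 by metis
  show ?case
  proof (cases j)
    case 0
    with Suc.prems(3) have "x = h'" by simp
    with y(1) Suc.prems(4) hnf_no_hred show ?thesis by blast
  next
    case (Suc j')
    with Suc.prems have "(hred ^^ Suc j') x h'" by simp
    then obtain y' where "hred x y'" "(hred ^^ j') y' h'" using relpowp_Suc_D2 by metis
    with y hred_det have "y' = y" by blast
    have "k = j' \<and> h = h'"
      using Suc.hyps[OF y(2) Suc.prems(2)] \<open>(hred ^^ j') y' h'\<close> \<open>y' = y\<close> Suc.prems(4) by blast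
    then show ?thesis using \<open>j = Suc j'\<close> by simp
  qed
qed

lemma head_red_to_hnf_eq:
  assumes "(hred ^^ k) t H" "is_hnf H"
  shows "head_red_to_hnf t = (k, H)"
proof -
  let ?P = "\<lambda>(k, h). (hred ^^ k) t h \<and> is_hnf h"
  have "?P (k, H)" using assms by simp
  then have "?P (SOME p. ?P p)" by (rule someI)
  moreover obtain k' h' where "(SOME p. ?P p) = (k', h')" by (cases "SOME p. ?P p")
  ultimately have "(hred ^^ k') t h'" "is_hnf h'" by simp_all
  note u = hred_pow_unique[OF this assms]
  from u have k: "k' = k" by simp
  from u have h: "h' = H" by simp
  show ?thesis unfolding head_red_to_hnf_def using \<open>(SOME p. ?P p) = (k', h')\<close> k h by (simp only:)
qed



inductive ap :: "dB \<Rightarrow> dB \<Rightarrow> bool" where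
  apVar: "ap (Var n) (Var n)"
| apRedex: "par s s' \<Longrightarrow> par u u' \<Longrightarrow> ap (App (Abs s) u) (App (Abs s') u')"
| apApp: "ap s t \<Longrightarrow> par u u' \<Longrightarrow> ap (App s u) (App t u')"

inductive ipar :: "dB \<Rightarrow> dB \<Rightarrow> bool" where
  ipAbs: "ipar s t \<Longrightarrow> ipar (Abs s) (Abs t)"
| ipAp: "ap s t \<Longrightarrow> ipar s t"

lemma ap_par: "ap s t \<Longrightarrow> par s t"
  by (induct rule: ap.induct) (auto intro: par.intros)

lemma ipar_par: "ipar s t \<Longrightarrow> par s t"
  by (induct rule: ipar.induct) (auto intro: par.intros ap_par)

lemma ap_not_abs: "ap s t \<Longrightarrow> \<not> is_abs s \<and> \<not> is_abs t"
  by (induct rule: ap.induct) auto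

lemma par_Abs_inv: "par (Abs s) t \<Longrightarrow> \<exists>t0. t = Abs t0 \<and> par s t0"
  by (cases rule: par.cases) auto

lemma ipar_Abs_inv: assumes "ipar (Abs s) t" shows "\<exists>t0. t = Abs t0 \<and> ipar s t0"
  using assms
proof (cases rule: ipar.cases)
  case (ipAp) then show ?thesis using ap_not_abs by fastforce
qed auto

lemma ipar_nonabs: "ipar s t \<Longrightarrow> \<not> is_abs s \<Longrightarrow> ap s t"
  by (cases rule: ipar.cases) auto

definition hn :: "dB \<Rightarrow> dB \<Rightarrow> dB \<Rightarrow> bool" where
  "hn N x y \<longleftrightarrow> hred x y \<and> par y N"

definition ST :: "dB \<Rightarrow> dB \<Rightarrow> bool" where
  "ST M N \<longleftrightarrow> (\<exists>L. (hn N)\<^sup>*\<^sup>* M L \<and> ipar L N)"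

lemma hn_hred: "(hn N)\<^sup>*\<^sup>* x y \<Longrightarrow> hred\<^sup>*\<^sup>* x y"
proof (induct rule: rtranclp_induct)
  case (step y z)
  then show ?case unfolding hn_def by (metis rtranclp.rtrancl_into_rtrancl)
qed simp

lemma ST_ipar: "ipar M N \<Longrightarrow> ST M N"
  unfolding ST_def by blast

lemma ST_prepend: "(hn N)\<^sup>*\<^sup>* M M' \<Longrightarrow> ST M' N \<Longrightarrow> ST M N"
  unfolding ST_def by (meson rtranclp_trans)

lemma ap_lift: "ap s t \<Longrightarrow> ap (lift s i) (lift t i)"
proof (induct arbitrary: i rule: ap.induct)
  case (apVar n) then show ?case by (simp add: ap.apVar)
next
  case (apRedex s s' u u') then show ?case by (simp add: ap.apRedex par_lift)
next
  case (apApp s t u u') then show ?case by (simp add: ap.apApp par_lift)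
qed

lemma ipar_lift: "ipar s t \<Longrightarrow> ipar (lift s i) (lift t i)"
proof (induct arbitrary: i rule: ipar.induct)
  case (ipAbs s t) then show ?case by (simp add: ipar.ipAbs)
next
  case (ipAp s t) then show ?case by (simp add: ipar.ipAp ap_lift)
qed

lemma hn_lift: "(hn N)\<^sup>*\<^sup>* M L \<Longrightarrow> (hn (lift N i))\<^sup>*\<^sup>* (lift M i) (lift L i)"
proof (induct rule: rtranclp_induct)
  case (step y z)
  then have "hn (lift N i) (lift y i) (lift z i)" unfolding hn_def by (simp add: hred_lift par_lift)
  with step show ?case by (metis rtranclp.rtrancl_into_rtrancl)
qed simp

lemma ST_lift: "ST s t \<Longrightarrow> ST (lift s i) (lift t i)"
  unfolding ST_def using hn_lift ipar_lift by blast

lemma hn_abs: "(hn N)\<^sup>*\<^sup>* M L \<Longrightarrow> (hn (Abs N))\<^sup>*\<^sup>* (Abs M) (Abs L)"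
proof (induct rule: rtranclp_induct)
  case (step y z)
  then have "hn (Abs N) (Abs y) (Abs z)" unfolding hn_def by (simp add: hred.hred_abs par.pAbs)
  with step show ?case by (metis rtranclp.rtrancl_into_rtrancl)
qed simp

lemma ST_Abs: "ST s t \<Longrightarrow> ST (Abs s) (Abs t)"
  unfolding ST_def using hn_abs ipar.ipAbs by blast

lemma ST_App_aux:
  assumes "(hn t)\<^sup>*\<^sup>* s L" "ipar L t" "par s t" "par b b'"
  shows "ST (App s b) (App t b')"
  using assms(1,3)
proof (induct rule: converse_rtranclp_induct)
  case base
  show ?case
  proof (cases "is_abs L")
    case True
    then obtain l0 where L: "L = Abs l0" by (cases L) auto
    with base obtain t0 where "t = Abs t0" "par l0 t0" using par_Abs_inv by blast
    then have "ap (App L b) (App t b')" using L assms(4) by (simp add: ap.apRedex)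
    then show ?thesis by (simp add: ST_ipar ipar.ipAp)
  next
    case False
    then have "ap L t" using assms(2) ipar_nonabs by blast
    then have "ap (App L b) (App t b')" using assms(4) by (simp add: ap.apApp)
    then show ?thesis by (simp add: ST_ipar ipar.ipAp)
  qed
next
  case (step s s1)
  show ?case
  proof (cases "is_abs s")
    case True
    then obtain l0 where L: "s = Abs l0" by (cases s) auto
    with step obtain t0 where "t = Abs t0" "par l0 t0" using par_Abs_inv by blast
    then have "ap (App s b) (App t b')" using L assms(4) by (simp add: ap.apRedex)
    then show ?thesis by (simp add: ST_ipar ipar.ipAp)
  next
    case False
    from step(1) have h: "hred s s1" "par s1 t" unfolding hn_def by auto
    then have "hn (App t b') (App s b) (App s1 b)"
      unfolding hn_def using False assms(4) by (simp add: hred.hred_app par.pApp)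
    moreover have "ST (App s1 b) (App t b')" using step(3) h(2) by blast
    ultimately show ?thesis using ST_prepend by blast
  qed
qed

lemma ST_App: "ST s t \<Longrightarrow> par s t \<Longrightarrow> par b b' \<Longrightarrow> ST (App s b) (App t b')"
  using ST_App_aux unfolding ST_def by blast

lemma hn_subst: "(hn N)\<^sup>*\<^sup>* M L \<Longrightarrow> par u u' \<Longrightarrow> (hn (subst N u' k))\<^sup>*\<^sup>* (subst M u k) (subst L u k)"
proof (induct rule: rtranclp_induct)
  case (step y z)
  then have "hn (subst N u' k) (subst y u k) (subst z u k)" unfolding hn_def by (simp add: hred_subst par_subst)
  with step show ?case by (metis rtranclp.rtrancl_into_rtrancl)
qed simp

lemma ap_subst_ST: "ap L N \<Longrightarrow> par u u' \<Longrightarrow> ST u u' \<Longrightarrow> ST (subst L u k) (subst N u' k)"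
proof (induct rule: ap.induct)
  case (apVar n)
  show ?case
  proof (cases "n = k")
    case True then show ?thesis using apVar by simp
  next
    case False then show ?thesis by (auto intro!: ST_ipar ipar.ipAp ap.apVar)
  qed
next
  case (apRedex s s' v v')
  have "ap (subst (App (Abs s) v) u k) (subst (App (Abs s') v') u' k)"
    using apRedex by (simp add: ap.apRedex par_subst par_lift)
  then show ?case by (simp add: ST_ipar ipar.ipAp)
next
  case (apApp s t v v')
  have "ST (subst s u k) (subst t u' k)" using apApp by blast
  moreover have "par (subst s u k) (subst t u' k)" using apApp ap_par par_subst by blast
  moreover have "par (subst v u k) (subst v' u' k)" using apApp par_subst by blast
  ultimately show ?case by (simp add: ST_App)
qed

lemma ipar_subst_ST: "ipar L N \<Longrightarrow> par u u' \<Longrightarrow> ST u u' \<Longrightarrow> ST (subst L u k) (subst N u' k)"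
proof (induct arbitrary: u u' k rule: ipar.induct)
  case (ipAbs s t)
  have "ST (subst s (lift u 0) (Suc k)) (subst t (lift u' 0) (Suc k))"
    using ipAbs par_lift ST_lift by blast
  then show ?case by (simp add: ST_Abs)
next
  case (ipAp s t) then show ?case using ap_subst_ST by blast
qed

lemma ST_subst: "ST s s' \<Longrightarrow> par u u' \<Longrightarrow> ST u u' \<Longrightarrow> ST (subst s u k) (subst s' u' k)"
proof -
  assume a: "ST s s'" "par u u'" "ST u u'"
  then obtain L where L: "(hn s')\<^sup>*\<^sup>* s L" "ipar L s'" unfolding ST_def by blast
  have "(hn (subst s' u' k))\<^sup>*\<^sup>* (subst s u k) (subst L u k)" using hn_subst L(1) a(2) by blast
  moreover have "ST (subst L u k) (subst s' u' k)" using ipar_subst_ST L(2) a by blast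
  ultimately show ?thesis using ST_prepend by blast
qed

lemma par_ST: "par M N \<Longrightarrow> ST M N"
proof (induct rule: par.induct)
  case (pVar n) then show ?case by (simp add: ST_ipar ipar.ipAp ap.apVar)
next
  case (pAbs s t) then show ?case by (simp add: ST_Abs)
next
  case (pApp s t u v) then show ?case by (simp add: ST_App)
next
  case (pBeta s s' u u')
  have "hn (subst s' u' 0) (App (Abs s) u) (subst s u 0)"
    unfolding hn_def using pBeta by (simp add: hred.hred_redex par_subst)
  moreover have "ST (subst s u 0) (subst s' u' 0)" using pBeta ST_subst by blast
  ultimately show ?case using ST_prepend by blast
qed



lemma hred_App_inv: "hred (App s u) N' \<Longrightarrow>
  (\<exists>s0. s = Abs s0 \<and> N' = subst s0 u 0) \<or> (\<exists>t. hred s t \<and> \<not> is_abs s \<and> N' = App t u)"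
  by (erule hred.cases) auto

lemma hred_Abs_inv: "hred (Abs s) N' \<Longrightarrow> \<exists>t. hred s t \<and> N' = Abs t"
  by (erule hred.cases) auto

lemma par_App_inv: "par (App s u) N \<Longrightarrow>
  (\<exists>t v. N = App t v \<and> par s t \<and> par u v) \<or>
  (\<exists>s0 s' u'. s = Abs s0 \<and> N = subst s' u' 0 \<and> par s0 s' \<and> par u u')"
  by (erule par.cases) auto

lemma par_Var_inv: "par (Var n) N \<Longrightarrow> N = Var n"
  by (erule par.cases) auto

lemma ap_postpone: "ap M N \<Longrightarrow> hred N N' \<Longrightarrow> \<exists>M'. hred M M' \<and> par M' N'"
proof (induct arbitrary: N' rule: ap.induct)
  case (apVar n) then show ?case using hred_not_Var by fastforce
next
  case (apRedex s s' u u')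
  from hred_App_inv[OF apRedex(3)] have "N' = subst s' u' 0" by auto
  then show ?case using apRedex by (metis hred.hred_redex par_subst)
next
  case (apApp s t u u')
  from hred_App_inv[OF apApp(4)] ap_not_abs[OF apApp(1)]
  obtain t' where t': "hred t t'" "N' = App t' u'" by auto
  from apApp(2)[OF t'(1)] obtain s1 where "hred s s1" "par s1 t'" by blast
  moreover have "\<not> is_abs s" using ap_not_abs[OF apApp(1)] by simp
  ultimately show ?case using t' apApp(3) by (metis hred.hred_app par.pApp)
qed

lemma ipar_postpone: "ipar M N \<Longrightarrow> hred N N' \<Longrightarrow> \<exists>M'. hred M M' \<and> par M' N'"
proof (induct arbitrary: N' rule: ipar.induct)
  case (ipAbs s t)
  from hred_Abs_inv[OF ipAbs(3)] obtain t' where "hred t t'" "N' = Abs t'" by blast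
  with ipAbs(2) show ?case by (metis hred.hred_abs par.pAbs)
next
  case (ipAp s t) then show ?case using ap_postpone by blast
qed

lemma ap_hva: "ap M N \<Longrightarrow> head_var_app N \<Longrightarrow> head_var_app M"
  by (induct rule: ap.induct) auto

lemma nonabs_hnf: "\<not> is_abs x \<Longrightarrow> is_hnf x = head_var_app x"
  by (cases x) auto

lemma ipar_hnf: "ipar M N \<Longrightarrow> is_hnf N \<Longrightarrow> is_hnf M"
proof (induct rule: ipar.induct)
  case (ipAp s t) then show ?case using ap_not_abs[OF ipAp(1)] nonabs_hnf ap_hva by metis
qed simp

lemma hnt_step: "par M N \<Longrightarrow> (hred ^^ k) N H \<Longrightarrow> is_hnf H \<Longrightarrow> \<exists>H'. hred\<^sup>*\<^sup>* M H' \<and> is_hnf H'"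
proof (induct k arbitrary: M N)
  case 0
  from par_ST[OF 0(1)] obtain L where L: "(hn N)\<^sup>*\<^sup>* M L" "ipar L N" unfolding ST_def by blast
  from 0(2) have "N = H" by simp
  with L 0(3) have "is_hnf L" using ipar_hnf by blast
  with hn_hred[OF L(1)] show ?case by blast
next
  case (Suc k)
  from Suc(3) obtain N1 where N1: "hred N N1" "(hred ^^ k) N1 H" using relpowp_Suc_D2 by metis
  from par_ST[OF Suc(2)] obtain L where L: "(hn N)\<^sup>*\<^sup>* M L" "ipar L N" unfolding ST_def by blast
  from ipar_postpone[OF L(2) N1(1)] obtain L' where L': "hred L L'" "par L' N1" by blast
  from Suc(1)[OF L'(2) N1(2) Suc(4)] obtain H' where "hred\<^sup>*\<^sup>* L' H'" "is_hnf H'" by blast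
  moreover have "hred\<^sup>*\<^sup>* M L'" using hn_hred[OF L(1)] L'(1) by (metis rtranclp.rtrancl_into_rtrancl)
  ultimately show ?case by (meson rtranclp_trans)
qed

lemma beta_par: "beta s t \<Longrightarrow> par s t"
  by (induct rule: beta.induct) (auto intro: par.intros)

lemma has_hnf_hred: "has_hnf M \<Longrightarrow> \<exists>H. hred\<^sup>*\<^sup>* M H \<and> is_hnf H"
proof -
  assume "has_hnf M"
  then obtain u where u: "beta\<^sup>*\<^sup>* M u" "is_hnf u" unfolding has_hnf_def by blast
  from u(1) show ?thesis
  proof (induct rule: converse_rtranclp_induct)
    case base then show ?case using u(2) by blast
  next
    case (step a b)
    then obtain H where "hred\<^sup>*\<^sup>* b H" "is_hnf H" by blast
    then obtain k where "(hred ^^ k) b H" using rtranclp_power by metis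
    with step(1) \<open>is_hnf H\<close> show ?case using hnt_step beta_par by blast
  qed
qed

lemma par_sim: "hred M M1 \<Longrightarrow> par M N \<Longrightarrow> \<exists>N1. (N1 = N \<or> hred N N1) \<and> par M1 N1"
proof (induct arbitrary: N rule: hred.induct)
  case (hred_redex s t)
  from par_App_inv[OF hred_redex] show ?case
  proof
    assume "\<exists>t' v. N = App t' v \<and> par (Abs s) t' \<and> par t v"
    then obtain t' v where "N = App t' v" "par (Abs s) t'" "par t v" by blast
    moreover from this obtain t0 where "t' = Abs t0" "par s t0" using par_Abs_inv by blast
    ultimately show ?thesis by (metis hred.hred_redex par_subst)
  next
    assume "\<exists>s0 s' u'. Abs s = Abs s0 \<and> N = subst s' u' 0 \<and> par s0 s' \<and> par t u'"
    then show ?thesis using par_subst by auto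
  qed
next
  case (hred_app s t u)
  from par_App_inv[OF hred_app(4)] hred_app(3)
  obtain s' u' where N: "N = App s' u'" "par s s'" "par u u'" by auto
  show ?case
  proof (cases "is_abs s'")
    case True
    obtain a b where ab: "s = App a b"
      using hred_app(1,3) hred_not_Var by (cases s) auto
    from par_App_inv[of a b s'] N(2) ab True
    obtain a0 a' b' where "a = Abs a0" "s' = subst a' b' 0" "par a0 a'" "par b b'" by auto
    moreover have "t = subst a0 b 0" using hred_det[OF hred_app(1)] ab \<open>a = Abs a0\<close>
      by (simp add: hred.hred_redex)
    ultimately have "par t s'" by (simp add: par_subst)
    then show ?thesis using N by (metis par.pApp)
  next
    case False
    from hred_app(2)[OF N(2)] obtain s1 where s1: "s1 = s' \<or> hred s' s1" "par t s1" by blast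
    then show ?thesis using N False by (metis hred.hred_app par.pApp)
  qed
next
  case (hred_abs s t)
  from par_Abs_inv[OF hred_abs(3)] obtain t0 where "N = Abs t0" "par s t0" by blast
  with hred_abs(2) show ?case by (metis hred.hred_abs par.pAbs)
qed

lemma par_hva: "par M N \<Longrightarrow> head_var_app M \<Longrightarrow> head_var_app N"
  by (induct rule: par.induct) auto

lemma par_hnf: "par M N \<Longrightarrow> is_hnf M \<Longrightarrow> is_hnf N"
proof (induct rule: par.induct)
  case (pApp s t u v) then show ?case using par_hva by (cases s; cases t) auto
qed auto

lemma hred_pow_sim: "(hred ^^ k) M H \<Longrightarrow> is_hnf H \<Longrightarrow> par M N \<Longrightarrow>
  \<exists>j H'. j \<le> k \<and> (hred ^^ j) N H' \<and> is_hnf H' \<and> par H H'"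
proof (induct k arbitrary: M N)
  case 0
  then have "M = H" by simp
  with 0 have "(hred ^^ 0) N N" "is_hnf N" "par H N" using par_hnf by auto
  then show ?case by blast
next
  case (Suc k)
  from Suc(2) obtain M1 where M1: "hred M M1" "(hred ^^ k) M1 H" using relpowp_Suc_D2 by metis
  from par_sim[OF M1(1) Suc(4)] obtain N1 where N1: "N1 = N \<or> hred N N1" "par M1 N1" by blast
  from Suc(1)[OF M1(2) Suc(3) N1(2)] obtain j H' where
    j: "j \<le> k" "(hred ^^ j) N1 H'" "is_hnf H'" "par H H'" by blast
  from N1(1) show ?case
  proof
    assume "N1 = N" with j show ?thesis by (metis le_Suc_eq)
  next
    assume "hred N N1"
    then have "(hred ^^ Suc j) N H'" using j(2) by (metis relpowp_Suc_I2)
    with j show ?thesis by (metis Suc_le_mono)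
  qed
qed

lemma hred_pow_simS: "par\<^sup>*\<^sup>* M N \<Longrightarrow> (hred ^^ k) M H \<Longrightarrow> is_hnf H \<Longrightarrow>
  \<exists>j H'. j \<le> k \<and> (hred ^^ j) N H' \<and> is_hnf H' \<and> par\<^sup>*\<^sup>* H H'"
proof (induct rule: rtranclp_induct)
  case base then show ?case by blast
next
  case (step y z)
  from step(3)[OF step(4,5)] obtain j H1 where
    j: "j \<le> k" "(hred ^^ j) y H1" "is_hnf H1" "par\<^sup>*\<^sup>* H H1" by blast
  from hred_pow_sim[OF j(2,3) step(2)] obtain j' H2 where
    "j' \<le> j" "(hred ^^ j') z H2" "is_hnf H2" "par H1 H2" by blast
  with j show ?case by (meson le_trans rtranclp.rtrancl_into_rtrancl)
qed



lemma parS_Var: "par\<^sup>*\<^sup>* (Var y) b \<Longrightarrow> b = Var y"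
  by (induct rule: rtranclp_induct) (auto dest: par_Var_inv)

lemma parS_Abs: "par\<^sup>*\<^sup>* (Abs s) b \<Longrightarrow> \<exists>s'. b = Abs s' \<and> par\<^sup>*\<^sup>* s s'"
proof (induct rule: rtranclp_induct)
  case (step y z)
  then obtain s' where "y = Abs s'" "par\<^sup>*\<^sup>* s s'" by blast
  with step(2) show ?case using par_Abs_inv by (metis rtranclp.rtrancl_into_rtrancl)
qed simp

lemma parS_App: "par\<^sup>*\<^sup>* (App f u) b \<Longrightarrow> head_var_app f \<Longrightarrow>
  \<exists>f' u'. b = App f' u' \<and> par\<^sup>*\<^sup>* f f' \<and> par\<^sup>*\<^sup>* u u' \<and> head_var_app f'"
proof (induct rule: rtranclp_induct)
  case (step y z)
  then obtain f' u' where fu: "y = App f' u'" "par\<^sup>*\<^sup>* f f'" "par\<^sup>*\<^sup>* u u'" "head_var_app f'" by blast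
  from par_App_inv[of f' u' z] step(2) fu obtain f'' u'' where
    "z = App f'' u''" "par f' f''" "par u' u''" by auto
  with fu show ?case using par_hva by (metis rtranclp.rtrancl_into_rtrancl)
qed simp

lemma betaS_appL: "beta\<^sup>*\<^sup>* s t \<Longrightarrow> beta\<^sup>*\<^sup>* (App s u) (App t u)"
  by (induct rule: rtranclp_induct) (auto intro: beta.intros rtranclp.rtrancl_into_rtrancl)
lemma betaS_appR: "beta\<^sup>*\<^sup>* s t \<Longrightarrow> beta\<^sup>*\<^sup>* (App u s) (App u t)"
  by (induct rule: rtranclp_induct) (auto intro: beta.intros rtranclp.rtrancl_into_rtrancl)
lemma betaS_abs: "beta\<^sup>*\<^sup>* s t \<Longrightarrow> beta\<^sup>*\<^sup>* (Abs s) (Abs t)"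
  by (induct rule: rtranclp_induct) (auto intro: beta.intros rtranclp.rtrancl_into_rtrancl)

lemma par_betaS: "par s t \<Longrightarrow> beta\<^sup>*\<^sup>* s t"
proof (induct rule: par.induct)
  case (pApp s t u v)
  then show ?case using betaS_appL betaS_appR by (meson rtranclp_trans)
next
  case (pAbs s t) then show ?case by (simp add: betaS_abs)
next
  case (pBeta s s' u u')
  have "beta\<^sup>*\<^sup>* (App (Abs s) u) (App (Abs s') u')"
    using pBeta betaS_appL betaS_appR betaS_abs by (meson rtranclp_trans)
  moreover have "beta (App (Abs s') u') (subst s' u' 0)" by (rule beta.beta_redex)
  ultimately show ?case by (metis rtranclp.rtrancl_into_rtrancl)
qed simp

lemma parS_betaS: "par\<^sup>*\<^sup>* s t \<Longrightarrow> beta\<^sup>*\<^sup>* s t"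
  by (induct rule: rtranclp_induct) (auto dest: par_betaS intro: rtranclp_trans)

lemma betaS_parS: "beta\<^sup>*\<^sup>* s t \<Longrightarrow> par\<^sup>*\<^sup>* s t"
  by (induct rule: rtranclp_induct) (auto dest: beta_par intro: rtranclp.rtrancl_into_rtrancl)

lemma hred_beta: "hred s t \<Longrightarrow> beta s t"
  by (induct rule: hred.induct) (auto intro: beta.intros)

lemma hredS_betaS: "hred\<^sup>*\<^sup>* s t \<Longrightarrow> beta\<^sup>*\<^sup>* s t"
  by (induct rule: rtranclp_induct) (auto dest: hred_beta intro: rtranclp.rtrancl_into_rtrancl)

definition ann_ok :: "nat option \<Rightarrow> nat option \<Rightarrow> bool" where
  "ann_ok o1 o2 \<longleftrightarrow> (o1 = None \<and> o2 = None) \<or> (\<exists>k1 k2. o1 = Some k1 \<and> o2 = Some k2 \<and> k2 \<le> k1)"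

definition S :: "bool \<Rightarrow> dB \<Rightarrow> dB \<Rightarrow> bool" where
  "S r a b \<longleftrightarrow> par\<^sup>*\<^sup>* a b \<and> (\<not> r \<longrightarrow> is_hnf a)"

definition step_rel :: "abt \<Rightarrow> abt \<Rightarrow> bool" where
  "step_rel T1 T2 \<longleftrightarrow> (T1 = ABot \<and> T2 = ABot)
   \<or> (\<exists>o1 o2 y. T1 = AVar o1 y \<and> T2 = AVar o2 y \<and> ann_ok o1 o2)
   \<or> (\<exists>o1 o2 a' b'. T1 = AAbs o1 (cbt_aux False a') \<and> T2 = AAbs o2 (cbt_aux False b')
        \<and> S False a' b' \<and> ann_ok o1 o2)
   \<or> (\<exists>o1 o2 f f' u u'. T1 = AApp o1 (cbt_aux False f) (cbt_aux True u)
        \<and> T2 = AApp o2 (cbt_aux False f') (cbt_aux True u')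
        \<and> S False f f' \<and> S True u u' \<and> ann_ok o1 o2)"

definition shp :: "nat option \<Rightarrow> dB \<Rightarrow> abt" where
  "shp o1 H = (case H of Var y \<Rightarrow> AVar o1 y | Abs s \<Rightarrow> AAbs o1 (cbt_aux False s)
     | App f u \<Rightarrow> AApp o1 (cbt_aux False f) (cbt_aux True u))"

lemma cbt_False: "cbt_aux False t = shp None t"
  unfolding shp_def by (rule trans[OF cbt_aux.code]) simp

lemma cbt_True: "has_hnf t \<Longrightarrow> cbt_aux True t = shp (Some (clock t)) (hnf_of t)"
  unfolding shp_def by (rule trans[OF cbt_aux.code]) simp

lemma cbt_True_bot: "\<not> has_hnf t \<Longrightarrow> cbt_aux True t = ABot"
  by (rule trans[OF cbt_aux.code]) simp

lemma sr_App: "S False f f' \<Longrightarrow> S True u u' \<Longrightarrow> ann_ok o1 o2 \<Longrightarrow>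
  step_rel (AApp o1 (cbt_aux False f) (cbt_aux True u)) (AApp o2 (cbt_aux False f') (cbt_aux True u'))"
  unfolding step_rel_def by (intro disjI2 exI conjI) (rule refl)+

lemma sr_Abs: "S False a b \<Longrightarrow> ann_ok o1 o2 \<Longrightarrow>
  step_rel (AAbs o1 (cbt_aux False a)) (AAbs o2 (cbt_aux False b))"
  unfolding step_rel_def by (intro disjI2 disjI1 exI conjI) (rule refl)+

lemma sr_Var: "ann_ok o1 o2 \<Longrightarrow> step_rel (AVar o1 y) (AVar o2 y)"
  unfolding step_rel_def by (intro disjI2 disjI1 exI conjI) (rule refl)+

lemma shape: assumes "is_hnf H" "par\<^sup>*\<^sup>* H H'" "ann_ok o1 o2"
  shows "step_rel (shp o1 H) (shp o2 H')"
proof (cases H)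
  case (Var y)
  then have "H' = Var y" using parS_Var assms by blast
  then show ?thesis using Var assms sr_Var unfolding shp_def by simp
next
  case (Abs s)
  with parS_Abs assms obtain s' where "H' = Abs s'" "par\<^sup>*\<^sup>* s s'" by blast
  moreover have "is_hnf s" using assms Abs by simp
  ultimately show ?thesis using Abs assms sr_Abs unfolding shp_def S_def by simp
next
  case (App f u)
  then have hf: "head_var_app f" using assms by simp
  with parS_App assms App obtain f' u' where
    fu: "H' = App f' u'" "par\<^sup>*\<^sup>* f f'" "par\<^sup>*\<^sup>* u u'" by blast
  have "is_hnf f" using hf by (cases f) auto
  then have "S False f f'" "S True u u'" using fu unfolding S_def by auto
  moreover have "shp o1 H = AApp o1 (cbt_aux False f) (cbt_aux True u)"
    "shp o2 H' = AApp o2 (cbt_aux False f') (cbt_aux True u')" by (simp_all add: shp_def App fu)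
  ultimately show ?thesis using assms(3) sr_App by simp
qed

lemma step: assumes "S r a b" shows "step_rel (cbt_aux r a) (cbt_aux r b)"
proof (cases r)
  case False
  then have "is_hnf a" "par\<^sup>*\<^sup>* a b" using assms unfolding S_def by auto
  then show ?thesis using False shape[of a b None None] by (simp add: cbt_False ann_ok_def)
next
  case True
  then have ab: "par\<^sup>*\<^sup>* a b" using assms unfolding S_def by auto
  show ?thesis
  proof (cases "has_hnf a")
    case False
    have "\<not> has_hnf b"
    proof
      assume "has_hnf b"
      then show False using False parS_betaS[OF ab] unfolding has_hnf_def by (meson rtranclp_trans)
    qed
    then show ?thesis using False True by (simp add: cbt_True_bot step_rel_def)
  next
    case hA: True
    from has_hnf_hred[OF hA] obtain H where "hred\<^sup>*\<^sup>* a H" "is_hnf H" by blast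
    then obtain k where k: "(hred ^^ k) a H" "is_hnf H" using rtranclp_power by metis
    from hred_pow_simS[OF ab k] obtain j H' where
      j: "j \<le> k" "(hred ^^ j) b H'" "is_hnf H'" "par\<^sup>*\<^sup>* H H'" by blast
    have "hred\<^sup>*\<^sup>* b H'" using relpowp_imp_rtranclp[OF j(2)] .
    then have "beta\<^sup>*\<^sup>* b H'" by (rule hredS_betaS)
    then have hB: "has_hnf b" unfolding has_hnf_def using j(3) by blast
    have "clock a = k" "hnf_of a = H"
      using head_red_to_hnf_eq[OF k] unfolding clock_def hnf_of_def by simp_all
    moreover have "clock b = j" "hnf_of b = H'"
      using head_red_to_hnf_eq[OF j(2,3)] unfolding clock_def hnf_of_def by simp_all
    moreover have "ann_ok (Some k) (Some j)" using j(1) by (simp add: ann_ok_def)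
    ultimately show ?thesis using True cbt_True[OF hA] cbt_True[OF hB] shape[OF k(2) j(4)] by simp
  qed
qed



lemma path: "S r a b \<Longrightarrow>
  (subtree_at (cbt_aux r a) p = None \<and> subtree_at (cbt_aux r b) p = None) \<or>
  (\<exists>r' a' b'. S r' a' b' \<and> subtree_at (cbt_aux r a) p = Some (cbt_aux r' a')
      \<and> subtree_at (cbt_aux r b) p = Some (cbt_aux r' b'))"
proof (induct p arbitrary: r a b)
  case Nil then show ?case by auto
next
  case (Cons i p)
  from step[OF Cons(2)] show ?case unfolding step_rel_def
  proof (elim disjE exE conjE)
    assume e: "cbt_aux r a = ABot" "cbt_aux r b = ABot"
    show ?thesis unfolding e by simp
  next
    fix o1 o2 y
    assume e: "cbt_aux r a = AVar o1 y" "cbt_aux r b = AVar o2 y"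
    show ?thesis unfolding e by simp
  next
    fix o1 o2 a' b'
    assume e: "cbt_aux r a = AAbs o1 (cbt_aux False a')" "cbt_aux r b = AAbs o2 (cbt_aux False b')"
      "S False a' b'"
    show ?thesis
    proof (cases "i = 0")
      case True then show ?thesis unfolding e(1,2) using Cons(1)[OF e(3)] by simp
    qed (unfold e(1,2), simp)
  next
    fix o1 o2 f f' u u'
    assume e: "cbt_aux r a = AApp o1 (cbt_aux False f) (cbt_aux True u)"
      "cbt_aux r b = AApp o2 (cbt_aux False f') (cbt_aux True u')" "S False f f'" "S True u u'"
    show ?thesis
    proof (cases "i = 1")
      case True then show ?thesis unfolding e(1,2) using Cons(1)[OF e(3)] by simp
    next
      case False
      show ?thesis
      proof (cases "i = 2")
        case True then show ?thesis unfolding e(1,2) using Cons(1)[OF e(4)] by simp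
      qed (unfold e(1,2), use False in simp)
    qed
  qed
qed

lemma root_ok: "step_rel T1 T2 \<Longrightarrow> ann_ok (root_ann T1) (root_ann T2)"
  unfolding step_rel_def by (auto simp: ann_ok_def)

lemma erase_ABot: "erase ABot = BBot" by (rule trans[OF erase.code]) simp
lemma erase_AVar: "erase (AVar o1 y) = BVar y" by (rule trans[OF erase.code]) simp
lemma erase_AAbs: "erase (AAbs o1 s) = BAbs (erase s)" by (rule trans[OF erase.code]) simp
lemma erase_AApp: "erase (AApp o1 f u) = BApp (erase f) (erase u)" by (rule trans[OF erase.code]) simp

lemma bt_eq: "S r a b \<Longrightarrow> erase (cbt_aux r a) = erase (cbt_aux r b)"
proof (coinduction arbitrary: r a b rule: bt.coinduct)
  case (Eq_bt r a b)
  from step[OF Eq_bt] show ?case unfolding step_rel_def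
  proof (elim disjE exE conjE)
    assume e: "cbt_aux r a = ABot" "cbt_aux r b = ABot"
    show ?thesis unfolding e by (simp add: erase_ABot)
  next
    fix o1 o2 y
    assume e: "cbt_aux r a = AVar o1 y" "cbt_aux r b = AVar o2 y"
    show ?thesis unfolding e by (simp add: erase_AVar)
  next
    fix o1 o2 a' b'
    assume e: "cbt_aux r a = AAbs o1 (cbt_aux False a')" "cbt_aux r b = AAbs o2 (cbt_aux False b')"
      "S False a' b'"
    then show ?thesis unfolding e(1,2) by (simp add: erase_AAbs) blast
  next
    fix o1 o2 f f' u u'
    assume e: "cbt_aux r a = AApp o1 (cbt_aux False f) (cbt_aux True u)"
      "cbt_aux r b = AApp o2 (cbt_aux False f') (cbt_aux True u')" "S False f f'" "S True u u'"
    then show ?thesis unfolding e(1,2) by (simp add: erase_AApp) blast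
  qed
qed

theorem proposition6p5:
  assumes "beta\<^sup>*\<^sup>* M N"
  shows "BT M = BT N \<and>
    (\<forall>p. (clock_at (cBT M) p = None \<and> clock_at (cBT N) p = None) \<or>
         (\<exists>k1 k2. clock_at (cBT M) p = Some k1 \<and> clock_at (cBT N) p = Some k2 \<and> k1 \<ge> k2))"
proof
  have S: "S True M N" unfolding S_def using betaS_parS[OF assms] by simp
  show "BT M = BT N" unfolding BT_def cBT_def using bt_eq[OF S] .
  show "\<forall>p. (clock_at (cBT M) p = None \<and> clock_at (cBT N) p = None) \<or>
         (\<exists>k1 k2. clock_at (cBT M) p = Some k1 \<and> clock_at (cBT N) p = Some k2 \<and> k1 \<ge> k2)"
  proof
    fix p
    from path[OF S, of p] show "(clock_at (cBT M) p = None \<and> clock_at (cBT N) p = None) \<or>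
         (\<exists>k1 k2. clock_at (cBT M) p = Some k1 \<and> clock_at (cBT N) p = Some k2 \<and> k1 \<ge> k2)"
    proof
      assume "subtree_at (cbt_aux True M) p = None \<and> subtree_at (cbt_aux True N) p = None"
      then show ?thesis unfolding clock_at_def cBT_def by simp
    next
      assume "\<exists>r' a' b'. S r' a' b' \<and> subtree_at (cbt_aux True M) p = Some (cbt_aux r' a')
        \<and> subtree_at (cbt_aux True N) p = Some (cbt_aux r' b')"
      then obtain r' a' b' where e: "S r' a' b'" "subtree_at (cbt_aux True M) p = Some (cbt_aux r' a')"
        "subtree_at (cbt_aux True N) p = Some (cbt_aux r' b')" by blast
      have "ann_ok (root_ann (cbt_aux r' a')) (root_ann (cbt_aux r' b'))"
        using root_ok[OF step[OF e(1)]] .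
      then show ?thesis unfolding clock_at_def cBT_def using e(2,3) by (auto simp: ann_ok_def)
    qed
  qed
qed

end
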